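(* Let $G$ be a finite abelian group, $M$ a $\hat G$-linear, left inductive monoid, $e$ a non-zero idempotent of $M$ with $\mathcal J$-class $J$. Then for every $W\in\mathrm{Rep}(\hat G_J,\hat G)$, $W{\uparrow_e}$ is a $\hat G$-linear representation of $M$ (an object of $\mathrm{Rep}(M,\hat G)$) under the action $a(x\otimes w)=(ax)\otimes w$.
   Context: $\hat G=G\sqcup\{0\}$ with $0$ absorbing. $\mathrm{Vect}_{\hat G}$: objects are finite pointed sets with an action of $\hat G$ ($0v=0$, $g0=0$) such that $G$ acts freely on nonzero elements; morphisms $f$ satisfy $f(0)=0$, $f(gv)=gf(v)$, $f(v_1)=f(v_2)\neq0\Rightarrow Gv_1=Gv_2$. A $\hat G$-linear monoid is a finite monoid $M$ with absorbing element $0_M$ containing $G$ as a subgroup of units commuting with all of $M$, with $G$ acting freely by translation on $M\setminus\{0_M\}$. $\mathrm{Rep}(M,\hat G)$: objects of $\mathrm{Vect}_{\hat G}$ with an $M$-action by morphisms of $\mathrm{Vect}_{\hat G}$, $0_M$ acting as zero and $g\in G$ as the scalar $g$. For $a\in M$: $J(a)=MaM$, $\mathcal J_a$ its $\mathcal J$-class ($a\sim b\iff J(a)=J(b)$), $I(a)=\{x\in J(a):MxM\neq J(a)\}$, $P(a)=(J(a)\setminus I(a))\cup\{0\}$ with product $xy$ if in $J(a)\setminus I(a)$ and $0$ otherwise; $M$ acts on $P(a)$ by left translation the same way. $M$ is left inductive if $P(e)$ is an object of $\mathrm{Rep}(M,\hat G)$ under left translation for every idempotent $e$. $G_J=eMe\cap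 J$ (a group with identity $e$), $\hat G_J=G_J\sqcup\{0\}$; $\mathrm{Rep}(\hat G_J,\hat G)$ consists of objects of $\mathrm{Vect}_{\hat G}$ with an action of $\hat G_J$ by morphisms of $\mathrm{Vect}_{\hat G}$, with $e$ acting as identity, $0$ as zero and $ge$ as the scalar $g$. $P(e)e=\{xe:x\in P(e)\}$. $W{\uparrow_e}=P(e)e\otimes_{\hat G_J}W$ is the set of symbols $x\otimes w$ ($x\in P(e)e$, $w\in W$) modulo the equivalence relation generated by $x\alpha\otimes w=x\otimes\alpha w$ ($\alpha\in\hat G_J$), $gx\otimes w=x\otimes gw$ ($g\in G$), and $x\otimes0=0\otimes w$; $G$ acts by $g(x\otimes w)=(gx)\otimes w$, and $ax$ denotes the product in $P(e)$. *)

theory Defs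
  imports "HOL-Algebra.Group"
begin

text \<open>An object is a finite pointed set (V, z) with an action of G; the extra element 0 of
  hat G acts as the constant map to the base point z.  G must fix z and act freely on V - {z}.\<close>

definition vect_obj :: "('g,'c) monoid_scheme \<Rightarrow> 'v set \<Rightarrow> 'v \<Rightarrow> ('g \<Rightarrow> 'v \<Rightarrow> 'v) \<Rightarrow> bool" where
  "vect_obj G V z act \<longleftrightarrow> finite V \<and> z \<in> V \<and>
     (\<forall>g\<in>carrier G. \<forall>v\<in>V. act g v \<in> V) \<and>
     (\<forall>v\<in>V. act \<one>\<^bsub>G\<^esub> v = v) \<and>
     (\<forall>g\<in>carrier G. \<forall>h\<in>carrier G. \<forall>v\<in>V. act (g \<otimes>\<^bsub>G\<^esub> h) v = act g (act h v)) \<and>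
     (\<forall>g\<in>carrier G. act g z = z) \<and>
     (\<forall>g\<in>carrier G. \<forall>v\<in>V. v \<noteq> z \<longrightarrow> act g v = v \<longrightarrow> g = \<one>\<^bsub>G\<^esub>)"

definition vect_mor :: "('g,'c) monoid_scheme \<Rightarrow> 'v set \<Rightarrow> 'v \<Rightarrow> ('g \<Rightarrow> 'v \<Rightarrow> 'v) \<Rightarrow>
    'u set \<Rightarrow> 'u \<Rightarrow> ('g \<Rightarrow> 'u \<Rightarrow> 'u) \<Rightarrow> ('v \<Rightarrow> 'u) \<Rightarrow> bool" where
  "vect_mor G V z act V' z' act' f \<longleftrightarrow>
     (\<forall>v\<in>V. f v \<in> V') \<and> f z = z' \<and>
     (\<forall>g\<in>carrier G. \<forall>v\<in>V. f (act g v) = act' g (f v)) \<and>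
     (\<forall>v1\<in>V. \<forall>v2\<in>V. f v1 = f v2 \<and> f v1 \<noteq> z' \<longrightarrow>
        (\<lambda>g. act g v1) ` carrier G = (\<lambda>g. act g v2) ` carrier G)"

definition hatG_linear_monoid :: "('g,'c) monoid_scheme \<Rightarrow> ('m,'d) monoid_scheme \<Rightarrow> 'm \<Rightarrow> ('g \<Rightarrow> 'm) \<Rightarrow> bool" where
  "hatG_linear_monoid G M zM \<iota> \<longleftrightarrow> group G \<and> monoid M \<and> finite (carrier M) \<and>
     zM \<in> carrier M \<and> (\<forall>x\<in>carrier M. zM \<otimes>\<^bsub>M\<^esub> x = zM \<and> x \<otimes>\<^bsub>M\<^esub> zM = zM) \<and>
     \<iota> \<in> hom G M \<and> inj_on \<iota> (carrier G) \<and> (\<forall>g\<in>carrier G. \<iota> g \<in> Units M) \<and>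
     (\<forall>g\<in>carrier G. \<forall>x\<in>carrier M. \<iota> g \<otimes>\<^bsub>M\<^esub> x = x \<otimes>\<^bsub>M\<^esub> \<iota> g) \<and>
     (\<forall>g\<in>carrier G. \<forall>x\<in>carrier M - {zM}. \<iota> g \<otimes>\<^bsub>M\<^esub> x = x \<longrightarrow> g = \<one>\<^bsub>G\<^esub>)"

definition rep_obj :: "('g,'c) monoid_scheme \<Rightarrow> ('m,'d) monoid_scheme \<Rightarrow> 'm \<Rightarrow> ('g \<Rightarrow> 'm) \<Rightarrow>
    'v set \<Rightarrow> 'v \<Rightarrow> ('g \<Rightarrow> 'v \<Rightarrow> 'v) \<Rightarrow> ('m \<Rightarrow> 'v \<Rightarrow> 'v) \<Rightarrow> bool" where
  "rep_obj G M zM \<iota> V z act \<rho> \<longleftrightarrow> vect_obj G V z act \<and>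
     (\<forall>a\<in>carrier M. vect_mor G V z act V z act (\<rho> a)) \<and>
     (\<forall>v\<in>V. \<rho> \<one>\<^bsub>M\<^esub> v = v) \<and>
     (\<forall>a\<in>carrier M. \<forall>b\<in>carrier M. \<forall>v\<in>V. \<rho> (a \<otimes>\<^bsub>M\<^esub> b) v = \<rho> a (\<rho> b v)) \<and>
     (\<forall>v\<in>V. \<rho> zM v = z) \<and>
     (\<forall>g\<in>carrier G. \<forall>v\<in>V. \<rho> (\<iota> g) v = act g v)"

definition Jid :: "('m,'d) monoid_scheme \<Rightarrow> 'm \<Rightarrow> 'm set" where
  "Jid M a = {x \<otimes>\<^bsub>M\<^esub> a \<otimes>\<^bsub>M\<^esub> y | x y. x \<in> carrier M \<and> y \<in> carrier M}"

definition Iid :: "('m,'d) monoid_scheme \<Rightarrow> 'm \<Rightarrow> 'm set" where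
  "Iid M a = {x \<in> Jid M a. Jid M x \<noteq> Jid M a}"

definition Pset :: "('m,'d) monoid_scheme \<Rightarrow> 'm \<Rightarrow> 'm \<Rightarrow> 'm set" where
  "Pset M zM a = (Jid M a - Iid M a) \<union> {zM}"

text \<open>Product in P(a) (also the left translation action of M on P(a)).\<close>
definition pmult :: "('m,'d) monoid_scheme \<Rightarrow> 'm \<Rightarrow> 'm \<Rightarrow> 'm \<Rightarrow> 'm \<Rightarrow> 'm" where
  "pmult M zM a x y = (if x \<otimes>\<^bsub>M\<^esub> y \<in> Jid M a - Iid M a then x \<otimes>\<^bsub>M\<^esub> y else zM)"

definition left_inductive :: "('g,'c) monoid_scheme \<Rightarrow> ('m,'d) monoid_scheme \<Rightarrow> 'm \<Rightarrow> ('g \<Rightarrow> 'm) \<Rightarrow> bool" where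
  "left_inductive G M zM \<iota> \<longleftrightarrow>
     (\<forall>e\<in>carrier M. e \<otimes>\<^bsub>M\<^esub> e = e \<longrightarrow>
        rep_obj G M zM \<iota> (Pset M zM e) zM (\<lambda>g x. pmult M zM e (\<iota> g) x) (pmult M zM e))"

definition GJ :: "('m,'d) monoid_scheme \<Rightarrow> 'm \<Rightarrow> 'm set" where
  "GJ M e = {e \<otimes>\<^bsub>M\<^esub> m \<otimes>\<^bsub>M\<^esub> e | m. m \<in> carrier M} \<inter> (Jid M e - Iid M e)"

definition hatGJ :: "('m,'d) monoid_scheme \<Rightarrow> 'm \<Rightarrow> 'm \<Rightarrow> 'm set" where
  "hatGJ M zM e = GJ M e \<union> {zM}"

definition repGJ_obj :: "('g,'c) monoid_scheme \<Rightarrow> ('m,'d) monoid_scheme \<Rightarrow> 'm \<Rightarrow> ('g \<Rightarrow> 'm) \<Rightarrow> 'm \<Rightarrow>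
    'w set \<Rightarrow> 'w \<Rightarrow> ('g \<Rightarrow> 'w \<Rightarrow> 'w) \<Rightarrow> ('m \<Rightarrow> 'w \<Rightarrow> 'w) \<Rightarrow> bool" where
  "repGJ_obj G M zM \<iota> e W zW act \<sigma> \<longleftrightarrow> vect_obj G W zW act \<and>
     (\<forall>\<alpha>\<in>hatGJ M zM e. vect_mor G W zW act W zW act (\<sigma> \<alpha>)) \<and>
     (\<forall>\<alpha>\<in>hatGJ M zM e. \<forall>\<beta>\<in>hatGJ M zM e. \<forall>w\<in>W. \<sigma> (\<alpha> \<otimes>\<^bsub>M\<^esub> \<beta>) w = \<sigma> \<alpha> (\<sigma> \<beta> w)) \<and>
     (\<forall>w\<in>W. \<sigma> e w = w) \<and>
     (\<forall>w\<in>W. \<sigma> zM w = zW) \<and>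
     (\<forall>g\<in>carrier G. \<forall>w\<in>W. \<sigma> (\<iota> g \<otimes>\<^bsub>M\<^esub> e) w = act g w)"

section \<open>The induced object W\<up>e = P(e)e \<otimes> W\<close>

definition PEe :: "('m,'d) monoid_scheme \<Rightarrow> 'm \<Rightarrow> 'm \<Rightarrow> 'm set" where
  "PEe M zM e = (\<lambda>x. pmult M zM e x e) ` Pset M zM e"

definition tens_gen :: "('g,'c) monoid_scheme \<Rightarrow> ('m,'d) monoid_scheme \<Rightarrow> 'm \<Rightarrow> ('g \<Rightarrow> 'm) \<Rightarrow> 'm \<Rightarrow>
    'w set \<Rightarrow> 'w \<Rightarrow> ('g \<Rightarrow> 'w \<Rightarrow> 'w) \<Rightarrow> ('m \<Rightarrow> 'w \<Rightarrow> 'w) \<Rightarrow> (('m \<times> 'w) \<times> ('m \<times> 'w)) set" where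
  "tens_gen G M zM \<iota> e W zW act \<sigma> =
     ({((pmult M zM e x \<alpha>, w), (x, \<sigma> \<alpha> w)) | x \<alpha> w.
         x \<in> PEe M zM e \<and> \<alpha> \<in> hatGJ M zM e \<and> w \<in> W}
    \<union> {((pmult M zM e (\<iota> g) x, w), (x, act g w)) | x g w.
         x \<in> PEe M zM e \<and> g \<in> carrier G \<and> w \<in> W}
    \<union> {((x, zW), (zM, w)) | x w. x \<in> PEe M zM e \<and> w \<in> W})
    \<inter> ((PEe M zM e \<times> W) \<times> (PEe M zM e \<times> W))"

definition tens_rel where
  "tens_rel G M zM \<iota> e W zW act \<sigma> =
     (tens_gen G M zM \<iota> e W zW act \<sigma> \<union> (tens_gen G M zM \<iota> e W zW act \<sigma>)\<inverse>)\<^sup>*"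

definition tens_carrier where
  "tens_carrier G M zM \<iota> e W zW act \<sigma> = (PEe M zM e \<times> W) // tens_rel G M zM \<iota> e W zW act \<sigma>"

definition tens_zero where
  "tens_zero G M zM \<iota> e W zW act \<sigma> = tens_rel G M zM \<iota> e W zW act \<sigma> `` {(zM, zW)}"

text \<open>The actions, defined on representatives; as unions over a class these are single classes
  exactly when well defined, so the theorem below includes well-definedness.\<close>
definition tens_gact where
  "tens_gact G M zM \<iota> e W zW act \<sigma> g C =
     (\<Union>(x, w)\<in>C. tens_rel G M zM \<iota> e W zW act \<sigma> `` {(pmult M zM e (\<iota> g) x, w)})"

definition tens_mact where
  "tens_mact G M zM \<iota> e W zW act \<sigma> a C =
     (\<Union>(x, w)\<in>C. tens_rel G M zM \<iota> e W zW act \<sigma> `` {(pmult M zM e a x, w)})"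

end

theory Submission imports Defs begin

locale tctx =
  fixes G :: "('g,'c) monoid_scheme" and M :: "('m,'d) monoid_scheme" (structure)
    and zM :: 'm and \<iota> :: "'g \<Rightarrow> 'm" and e :: 'm
    and W :: "'w set" and zW :: 'w and act :: "'g \<Rightarrow> 'w \<Rightarrow> 'w" and \<sigma> :: "'m \<Rightarrow> 'w \<Rightarrow> 'w"
  assumes grp: "group G"
    and lin: "hatG_linear_monoid G M zM \<iota>"
    and li: "left_inductive G M zM \<iota>"
    and eM: "e \<in> carrier M" and ee: "e \<otimes> e = e" and ez: "e \<noteq> zM"
    and rp: "repGJ_obj G M zM \<iota> e W zW act \<sigma>"
begin

lemma mon: "monoid M" using lin by (simp add: hatG_linear_monoid_def)
lemma finM: "finite (carrier M)" using lin by (simp add: hatG_linear_monoid_def)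
lemma zMc: "zM \<in> carrier M" using lin by (simp add: hatG_linear_monoid_def)
lemma zl: "x \<in> carrier M \<Longrightarrow> zM \<otimes> x = zM" using lin by (simp add: hatG_linear_monoid_def)
lemma zr: "x \<in> carrier M \<Longrightarrow> x \<otimes> zM = zM" using lin by (simp add: hatG_linear_monoid_def)
lemma ihom: "\<iota> \<in> hom G M" using lin by (simp add: hatG_linear_monoid_def)
lemma ic: "g \<in> carrier G \<Longrightarrow> \<iota> g \<in> carrier M" using ihom by (simp add: hom_def Pi_def)
lemma imul: "g \<in> carrier G \<Longrightarrow> h \<in> carrier G \<Longrightarrow> \<iota> (g \<otimes>\<^bsub>G\<^esub> h) = \<iota> g \<otimes> \<iota> h"
  using ihom by (simp add: hom_def)
lemma iU: "g \<in> carrier G \<Longrightarrow> \<iota> g \<in> Units M" using lin by (simp add: hatG_linear_monoid_def)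
lemma icomm: "g \<in> carrier G \<Longrightarrow> x \<in> carrier M \<Longrightarrow> \<iota> g \<otimes> x = x \<otimes> \<iota> g"
  using lin by (simp add: hatG_linear_monoid_def)

lemmas ma = monoid.m_assoc[OF mon]
lemmas mc = monoid.m_closed[OF mon]
lemmas ml = monoid.l_one[OF mon]
lemmas mr = monoid.r_one[OF mon]
lemmas mo = monoid.one_closed[OF mon]

lemma Jid_sub: "x \<in> carrier M \<Longrightarrow> Jid M x \<subseteq> carrier M"
  unfolding Jid_def using mc by auto
lemma Jid_mem: "x \<in> carrier M \<Longrightarrow> m \<in> carrier M \<Longrightarrow> n \<in> carrier M \<Longrightarrow> m \<otimes> x \<otimes> n \<in> Jid M x"
  unfolding Jid_def by auto
lemma Jid_self: "x \<in> carrier M \<Longrightarrow> x \<in> Jid M x"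
  using Jid_mem[of x \<one> \<one>] mo ml mr by auto
lemma Jid_trans: assumes "x \<in> carrier M" "y \<in> Jid M x" shows "Jid M y \<subseteq> Jid M x"
proof
  fix z assume "z \<in> Jid M y"
  then obtain p q where pq: "p \<in> carrier M" "q \<in> carrier M" "z = p \<otimes> y \<otimes> q" unfolding Jid_def by auto
  obtain m n where mn: "m \<in> carrier M" "n \<in> carrier M" "y = m \<otimes> x \<otimes> n" using assms(2) unfolding Jid_def by auto
  have "z = (p \<otimes> m) \<otimes> x \<otimes> (n \<otimes> q)" using pq mn assms(1) by (simp add: ma mc)
  then show "z \<in> Jid M x" using Jid_mem pq mn assms(1) mc by auto
qed

definition Js where "Js = Jid M e - Iid M e"
abbreviation p where "p \<equiv> pmult M zM e"
definition L where "L = {x \<in> Js. x \<otimes> e = x}"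

lemma p_def: "p a x = (if a \<otimes> x \<in> Js then a \<otimes> x else zM)"
  unfolding pmult_def Js_def by simp

lemma Js_iff: "y \<in> Js \<longleftrightarrow> y \<in> Jid M e \<and> Jid M y = Jid M e"
  unfolding Js_def Iid_def by auto

lemma Jide_c: "y \<in> Jid M e \<Longrightarrow> y \<in> carrier M" using Jid_sub eM by auto
lemma Js_c: "y \<in> Js \<Longrightarrow> y \<in> carrier M" using Js_iff Jide_c by auto

lemma Jid_mult3: "y \<in> Jid M e \<Longrightarrow> m \<in> carrier M \<Longrightarrow> n \<in> carrier M \<Longrightarrow> m \<otimes> y \<otimes> n \<in> Jid M e"
  using Jid_trans[OF eM] Jid_mem Jide_c by blast
lemma Jid_multl: "y \<in> Jid M e \<Longrightarrow> m \<in> carrier M \<Longrightarrow> m \<otimes> y \<in> Jid M e"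
  using Jid_mult3[of y m \<one>] mo mr mc Jide_c by auto
lemma Jid_multr: "y \<in> Jid M e \<Longrightarrow> m \<in> carrier M \<Longrightarrow> y \<otimes> m \<in> Jid M e"
  using Jid_mult3[of y \<one> m] mo ml mc Jide_c by auto

lemma K: assumes "y \<in> Jid M e" "m \<in> carrier M" "n \<in> carrier M" "m \<otimes> y \<otimes> n \<in> Js"
  shows "y \<in> Js"
proof -
  have c: "y \<in> carrier M" using assms Jide_c by auto
  have "Jid M (m \<otimes> y \<otimes> n) \<subseteq> Jid M y" using Jid_trans[OF c Jid_mem[OF c assms(2,3)]] .
  moreover have "Jid M y \<subseteq> Jid M e" using Jid_trans[OF eM assms(1)] .
  moreover have "Jid M (m \<otimes> y \<otimes> n) = Jid M e" using assms(4) Js_iff by auto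
  ultimately show ?thesis using Js_iff assms(1) by auto
qed

lemma Kl: "y \<in> Jid M e \<Longrightarrow> m \<in> carrier M \<Longrightarrow> m \<otimes> y \<in> Js \<Longrightarrow> y \<in> Js"
  using K[of y m \<one>] mo mr mc Jide_c by auto
lemma Kr: "y \<in> Jid M e \<Longrightarrow> n \<in> carrier M \<Longrightarrow> y \<otimes> n \<in> Js \<Longrightarrow> y \<in> Js"
  using K[of y \<one> n] mo ml mc Jide_c by auto

lemma e_Js: "e \<in> Js" using Js_iff Jid_self eM by auto
lemma zM_Jid: "zM \<in> Jid M e" using Jid_mem[OF eM zMc mo] zl[OF eM] zl[OF mo] by simp
lemma zM_notJs: "zM \<notin> Js"
proof
  assume "zM \<in> Js"
  then have "e \<in> Jid M zM" using Js_iff Jid_self eM by auto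
  then obtain m n where "m \<in> carrier M" "n \<in> carrier M" "e = m \<otimes> zM \<otimes> n" unfolding Jid_def by auto
  then show False using zl zr ez mc zMc by auto
qed

lemma Pset_eq: "Pset M zM e = Js \<union> {zM}" unfolding Pset_def Js_def by simp
lemma Pset_Jid: "x \<in> Pset M zM e \<Longrightarrow> x \<in> Jid M e" using Pset_eq Js_iff zM_Jid by auto
lemma Pset_c: "x \<in> Pset M zM e \<Longrightarrow> x \<in> carrier M" using Pset_Jid Jide_c by auto


lemma Prep: "rep_obj G M zM \<iota> (Pset M zM e) zM (\<lambda>g x. p (\<iota> g) x) p"
  using li eM ee unfolding left_inductive_def by blast

lemma P_closed: "a \<in> carrier M \<Longrightarrow> x \<in> Pset M zM e \<Longrightarrow> p a x \<in> Pset M zM e"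
  using Prep unfolding rep_obj_def vect_mor_def by blast
lemma P_one: "x \<in> Pset M zM e \<Longrightarrow> p \<one> x = x"
  using Prep unfolding rep_obj_def by blast
lemma P_comp: "a \<in> carrier M \<Longrightarrow> b \<in> carrier M \<Longrightarrow> x \<in> Pset M zM e \<Longrightarrow> p (a \<otimes> b) x = p a (p b x)"
  using Prep unfolding rep_obj_def by blast
lemma P_zero: "x \<in> Pset M zM e \<Longrightarrow> p zM x = zM"
  using Prep unfolding rep_obj_def by blast
lemma P_az: "a \<in> carrier M \<Longrightarrow> p a zM = zM"
  using zr zM_notJs p_def by simp
lemma P_gone: "x \<in> Pset M zM e \<Longrightarrow> p (\<iota> \<one>\<^bsub>G\<^esub>) x = x"
  using Prep unfolding rep_obj_def vect_obj_def by blast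
lemma P_gcomp: "g \<in> carrier G \<Longrightarrow> h \<in> carrier G \<Longrightarrow> x \<in> Pset M zM e \<Longrightarrow>
   p (\<iota> (g \<otimes>\<^bsub>G\<^esub> h)) x = p (\<iota> g) (p (\<iota> h) x)"
  using Prep unfolding rep_obj_def vect_obj_def by blast
lemma P_comm: "a \<in> carrier M \<Longrightarrow> g \<in> carrier G \<Longrightarrow> x \<in> Pset M zM e \<Longrightarrow>
   p a (p (\<iota> g) x) = p (\<iota> g) (p a x)"
  using Prep unfolding rep_obj_def vect_mor_def by blast
lemma P_orb: "a \<in> carrier M \<Longrightarrow> x1 \<in> Pset M zM e \<Longrightarrow> x2 \<in> Pset M zM e \<Longrightarrow> p a x1 = p a x2 \<Longrightarrow>
   p a x1 \<noteq> zM \<Longrightarrow> (\<lambda>g. p (\<iota> g) x1) ` carrier G = (\<lambda>g. p (\<iota> g) x2) ` carrier G"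
  using Prep unfolding rep_obj_def vect_mor_def by blast

lemma PEe_char: "PEe M zM e = {x \<in> Pset M zM e. x \<otimes> e = x}"
proof
  show "PEe M zM e \<subseteq> {x \<in> Pset M zM e. x \<otimes> e = x}"
  proof
    fix y assume "y \<in> PEe M zM e"
    then obtain x where x: "x \<in> Pset M zM e" "y = p x e" unfolding PEe_def by auto
    have xc: "x \<in> carrier M" using Pset_c x by auto
    show "y \<in> {x \<in> Pset M zM e. x \<otimes> e = x}"
    proof (cases "x \<otimes> e \<in> Js")
      case True
      then show ?thesis using x p_def Pset_eq ma[OF xc eM eM] ee by auto
    next
      case False
      then show ?thesis using x p_def Pset_eq zl[OF eM] by auto
    qed
  qed
next
  show "{x \<in> Pset M zM e. x \<otimes> e = x} \<subseteq> PEe M zM e"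
  proof
    fix x assume x: "x \<in> {x \<in> Pset M zM e. x \<otimes> e = x}"
    have "p x e = x" using x p_def Pset_eq zM_notJs by auto
    then show "x \<in> PEe M zM e" unfolding PEe_def using x by force
  qed
qed

lemma PEe_eq: "PEe M zM e = L \<union> {zM}"
  using PEe_char Pset_eq L_def zl[OF eM] by auto
lemma PEe_P: "x \<in> PEe M zM e \<Longrightarrow> x \<in> Pset M zM e" using PEe_char by auto
lemma PEe_c: "x \<in> PEe M zM e \<Longrightarrow> x \<in> carrier M" using PEe_P Pset_c by auto
lemma L_c: "x \<in> L \<Longrightarrow> x \<in> carrier M" using L_def Js_c by auto
lemma L_Js: "x \<in> L \<Longrightarrow> x \<in> Js" using L_def by auto
lemma L_e: "x \<in> L \<Longrightarrow> x \<otimes> e = x" using L_def by auto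
lemma zM_notL: "zM \<notin> L" using L_def zM_notJs by auto
lemma zM_PEe: "zM \<in> PEe M zM e" using PEe_eq by auto

lemma PEe_closed: assumes a: "a \<in> carrier M" and x: "x \<in> PEe M zM e" shows "p a x \<in> PEe M zM e"
proof -
  have xc: "x \<in> carrier M" using PEe_c x by auto
  have "p a x \<otimes> e = p a x"
  proof (cases "a \<otimes> x \<in> Js")
    case True
    then show ?thesis using p_def ma[OF a xc eM] PEe_char x by auto
  next
    case False
    then show ?thesis using p_def zl[OF eM] by auto
  qed
  then show ?thesis using PEe_char P_closed[OF a PEe_P[OF x]] by auto
qed

lemma assoc2: assumes a: "a \<in> carrier M" and x: "x \<in> Jid M e" and al: "\<alpha> \<in> carrier M"
  shows "p a (p x \<alpha>) = p (p a x) \<alpha>"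
proof -
  have xc: "x \<in> carrier M" using x Jide_c by auto
  show ?thesis
  proof (cases "x \<otimes> \<alpha> \<in> Js")
    case T1: True
    show ?thesis
    proof (cases "a \<otimes> x \<in> Js")
      case True
      then show ?thesis using T1 p_def ma[OF a xc al] by simp
    next
      case False
      have "a \<otimes> x \<otimes> \<alpha> \<notin> Js" using Kr[OF Jid_multl[OF x a] al] False by auto
      then show ?thesis using T1 False p_def ma[OF a xc al] zl[OF al] zM_notJs by simp
    qed
  next
    case F1: False
    have "a \<otimes> (x \<otimes> \<alpha>) \<notin> Js" using Kl[OF Jid_multr[OF x al] a] F1 by auto
    then show ?thesis using F1 p_def ma[OF a xc al] zl[OF al] zr[OF a] zM_notJs by simp
  qed
qed


lemma pigeon: assumes a: "a \<in> carrier M" shows "\<exists>i j. i < j \<and> a [^] (i::nat) = a [^] (j::nat)"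
proof -
  have "range (\<lambda>n::nat. a [^] n) \<subseteq> carrier M" using monoid.nat_pow_closed[OF mon a] by auto
  then have "finite (range (\<lambda>n::nat. a [^] n))" using finM finite_subset by auto
  then have "\<not> inj (\<lambda>n::nat. a [^] n)" using finite_imageD by auto
  then obtain i j :: nat where "i \<noteq> j" "a [^] i = a [^] j" unfolding inj_def by auto
  then show ?thesis by (metis linorder_neqE_nat)
qed

lemmas npc = monoid.nat_pow_closed[OF mon]
lemmas npm = monoid.nat_pow_mult[OF mon]
lemmas nps = monoid.nat_pow_Suc[OF mon]
lemmas nps2 = monoid.nat_pow_Suc2[OF mon]

lemma stabL: assumes x: "x \<in> Js" and xe: "x \<otimes> e = x" shows "\<exists>y\<in>carrier M. y \<otimes> x = e"
proof -
  have xc: "x \<in> carrier M" using Js_c x by auto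
  have "e \<in> Jid M x" using x Js_iff Jid_self[OF eM] by auto
  then obtain u v where uv: "u \<in> carrier M" "v \<in> carrier M" "e = u \<otimes> x \<otimes> v" unfolding Jid_def by auto
  define a where "a = u \<otimes> x"
  have ac: "a \<in> carrier M" using a_def uv xc mc by auto
  have ae: "a \<otimes> e = a" using a_def ma[OF uv(1) xc eM] xe by simp
  have e1: "e = a \<otimes> e \<otimes> v" using uv(3) ae a_def by simp
  have en: "e = a [^] n \<otimes> e \<otimes> v [^] n" for n :: nat
  proof (induction n)
    case 0
    then show ?case using eM by (simp add: ml mr)
  next
    case (Suc n)
    have "a [^] Suc n \<otimes> e \<otimes> v [^] Suc n = a [^] n \<otimes> (a \<otimes> e \<otimes> v) \<otimes> v [^] n"
      unfolding nps nps2[OF uv(2)] using ac uv(1,2) eM npc nps2[OF uv(2), of n] nps[of v n] by (simp add: ma mc)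
    then show ?case using Suc e1 by simp
  qed
  obtain i j :: nat where ij: "i < j" "a [^] i = a [^] j" using pigeon[OF ac] by auto
  define q where "q = j - i"
  have q: "j = i + q" "q > 0" using ij q_def by auto
  have vv: "v [^] (i + q) = v [^] i \<otimes> v [^] q" using npm[OF uv(2)] by simp
  have "e = a [^] i \<otimes> e \<otimes> v [^] (i + q)" using en[of j] ij q by simp
  also have "\<dots> = (a [^] i \<otimes> e \<otimes> v [^] i) \<otimes> v [^] q"
    unfolding vv using ac uv eM npc by (simp add: ma mc)
  finally have evq: "e = e \<otimes> v [^] q" using en[of i] by simp
  have "e = a [^] q \<otimes> e \<otimes> v [^] q" using en by simp
  also have "\<dots> = a [^] q \<otimes> (e \<otimes> v [^] q)" using ac uv eM npc by (simp add: ma mc)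
  finally have eq: "e = a [^] q \<otimes> e" using evq by simp
  obtain r where r: "q = Suc r" using q by (cases q) auto
  have "a [^] q \<otimes> e = a [^] r \<otimes> (a \<otimes> e)"
    unfolding r nps using ac eM npc by (simp add: ma)
  also have "\<dots> = (a [^] r \<otimes> u) \<otimes> x" using ae a_def ac uv xc npc by (simp add: ma)
  finally show ?thesis using eq ac uv npc mc by auto
qed

lemma stabR: assumes x: "x \<in> Js" and xe: "e \<otimes> x = x" shows "\<exists>y\<in>carrier M. x \<otimes> y = e"
proof -
  have xc: "x \<in> carrier M" using Js_c x by auto
  have "e \<in> Jid M x" using x Js_iff Jid_self[OF eM] by auto
  then obtain u v where uv: "u \<in> carrier M" "v \<in> carrier M" "e = u \<otimes> x \<otimes> v" unfolding Jid_def by auto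
  define b where "b = x \<otimes> v"
  have bc: "b \<in> carrier M" using b_def uv xc mc by auto
  have eb: "e \<otimes> b = b" using b_def ma[OF eM xc uv(2)] xe by simp
  have "u \<otimes> e \<otimes> b = u \<otimes> (e \<otimes> b)" using ma uv eM bc by simp
  then have e1: "e = u \<otimes> e \<otimes> b" using uv(3) eb b_def ma uv xc by simp
  have en: "e = u [^] n \<otimes> e \<otimes> b [^] n" for n :: nat
  proof (induction n)
    case 0
    then show ?case using eM by (simp add: ml mr)
  next
    case (Suc n)
    have "u [^] Suc n \<otimes> e \<otimes> b [^] Suc n = u [^] n \<otimes> (u \<otimes> e \<otimes> b) \<otimes> b [^] n"
      unfolding nps nps2[OF bc] using bc uv(1,2) eM npc nps2[OF bc, of n] nps[of b n] by (simp add: ma mc)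
    then show ?case using Suc e1 by simp
  qed
  obtain i j :: nat where ij: "i < j" "b [^] i = b [^] j" using pigeon[OF bc] by auto
  define q where "q = j - i"
  have q: "j = q + i" "q > 0" using ij q_def by auto
  have uu: "u [^] (q + i) = u [^] q \<otimes> u [^] i" using npm[OF uv(1)] by simp
  have "e = u [^] (q + i) \<otimes> e \<otimes> b [^] i" using en[of j] ij q by simp
  also have "\<dots> = u [^] q \<otimes> (u [^] i \<otimes> e \<otimes> b [^] i)"
    unfolding uu using bc uv eM npc by (simp add: ma mc)
  finally have evq: "e = u [^] q \<otimes> e" using en[of i] by simp
  have "e = u [^] q \<otimes> e \<otimes> b [^] q" using en by simp
  also have "\<dots> = e \<otimes> b [^] q" using evq by simp
  finally have eq: "e = e \<otimes> b [^] q" .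
  obtain r where r: "q = Suc r" using q by (cases q) auto
  have "e \<otimes> b [^] q = (e \<otimes> b) \<otimes> b [^] r"
    unfolding r nps2[OF bc] using bc eM npc by (simp add: ma)
  also have "\<dots> = x \<otimes> (v \<otimes> b [^] r)" using eb b_def bc uv xc npc by (simp add: ma)
  finally show ?thesis using eq bc uv npc mc by auto
qed


lemma GJ_char: "\<alpha> \<in> GJ M e \<longleftrightarrow> \<alpha> \<in> Js \<and> e \<otimes> \<alpha> = \<alpha> \<and> \<alpha> \<otimes> e = \<alpha>"
proof
  assume a: "\<alpha> \<in> GJ M e"
  then obtain m where m: "m \<in> carrier M" "\<alpha> = e \<otimes> m \<otimes> e" unfolding GJ_def by auto
  have "e \<otimes> \<alpha> = (e \<otimes> e) \<otimes> m \<otimes> e" using m eM by (simp add: ma mc)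
  moreover have "\<alpha> \<otimes> e = e \<otimes> m \<otimes> (e \<otimes> e)" using m eM by (simp add: ma mc)
  ultimately show "\<alpha> \<in> Js \<and> e \<otimes> \<alpha> = \<alpha> \<and> \<alpha> \<otimes> e = \<alpha>" using a ee m unfolding GJ_def Js_def by auto
next
  assume a: "\<alpha> \<in> Js \<and> e \<otimes> \<alpha> = \<alpha> \<and> \<alpha> \<otimes> e = \<alpha>"
  have c: "\<alpha> \<in> carrier M" using a Js_c by auto
  have "\<alpha> = e \<otimes> \<alpha> \<otimes> e" using a by simp
  then show "\<alpha> \<in> GJ M e" unfolding GJ_def using a c Js_def by blast
qed

lemma GJ_L: "\<alpha> \<in> GJ M e \<Longrightarrow> \<alpha> \<in> L" using GJ_char L_def by auto
lemma GJ_c: "\<alpha> \<in> GJ M e \<Longrightarrow> \<alpha> \<in> carrier M" using GJ_L L_c by auto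
lemma GJ_le: "\<alpha> \<in> GJ M e \<Longrightarrow> e \<otimes> \<alpha> = \<alpha>" using GJ_char by auto
lemma GJ_re: "\<alpha> \<in> GJ M e \<Longrightarrow> \<alpha> \<otimes> e = \<alpha>" using GJ_char by auto
lemma e_GJ: "e \<in> GJ M e" using GJ_char e_Js ee by auto
lemma e_L: "e \<in> L" using GJ_L e_GJ by auto

lemma GJ_inv: assumes a: "\<alpha> \<in> GJ M e" shows "\<exists>\<beta>\<in>GJ M e. \<alpha> \<otimes> \<beta> = e \<and> \<beta> \<otimes> \<alpha> = e"
proof -
  have ac: "\<alpha> \<in> carrier M" using GJ_c a by auto
  obtain y where y: "y \<in> carrier M" "y \<otimes> \<alpha> = e" using stabL GJ_char a by blast
  obtain z where z: "z \<in> carrier M" "\<alpha> \<otimes> z = e" using stabR GJ_char a by blast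
  define \<beta> where "\<beta> = e \<otimes> y \<otimes> e"
  define \<beta>' where "\<beta>' = e \<otimes> z \<otimes> e"
  have bc: "\<beta> \<in> carrier M" "\<beta>' \<in> carrier M" using \<beta>_def \<beta>'_def y z eM mc by auto
  have b1: "\<beta> \<otimes> \<alpha> = e"
  proof -
    have "\<beta> \<otimes> \<alpha> = e \<otimes> y \<otimes> (e \<otimes> \<alpha>)" using \<beta>_def y eM ac by (simp add: ma mc)
    also have "\<dots> = e \<otimes> (y \<otimes> \<alpha>)" using GJ_le a y eM ac by (simp add: ma mc)
    finally show ?thesis using y ee by simp
  qed
  have b2: "\<alpha> \<otimes> \<beta>' = e"
  proof -
    have "\<alpha> \<otimes> \<beta>' = (\<alpha> \<otimes> e) \<otimes> z \<otimes> e" using \<beta>'_def z eM ac by (simp add: ma mc)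
    also have "\<dots> = (\<alpha> \<otimes> z) \<otimes> e" using GJ_re a z eM ac by (simp add: ma mc)
    finally show ?thesis using z ee by simp
  qed
  have be: "\<beta> \<otimes> e = \<beta>" using \<beta>_def y eM ee by (simp add: ma mc)
  have "e \<otimes> \<beta>' = (e \<otimes> e) \<otimes> z \<otimes> e" using \<beta>'_def z eM by (simp add: ma mc)
  then have eb': "e \<otimes> \<beta>' = \<beta>'" using \<beta>'_def ee by simp
  have "\<beta> = \<beta> \<otimes> (\<alpha> \<otimes> \<beta>')" using b2 be by simp
  also have "\<dots> = (\<beta> \<otimes> \<alpha>) \<otimes> \<beta>'" using bc ac by (simp add: ma)
  finally have bb: "\<beta> = \<beta>'" using b1 eb' by simp
  have eb: "e \<otimes> \<beta> = \<beta>" using bb eb' by simp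
  have "\<beta> = (e \<otimes> y) \<otimes> e \<otimes> \<one>" using \<beta>_def y(1) eM by (simp add: mr mc)
  then have bJ: "\<beta> \<in> Jid M e" using Jid_mem[OF eM mc[OF eM y(1)] mo] by simp
  have "e \<in> Jid M \<beta>" using b1 Jid_mem[OF bc(1) mo ac] bc ml by auto
  then have "Jid M e \<subseteq> Jid M \<beta>" using Jid_trans bc by auto
  moreover have "Jid M \<beta> \<subseteq> Jid M e" using Jid_trans[OF eM bJ] .
  ultimately have "\<beta> \<in> Js" using bJ Js_iff by auto
  then have "\<beta> \<in> GJ M e" using GJ_char eb be by auto
  then show ?thesis using b1 b2 bb by auto
qed

lemma L_mult: assumes x: "x \<in> L" and a: "\<alpha> \<in> GJ M e" shows "x \<otimes> \<alpha> \<in> L"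
proof -
  have xc: "x \<in> carrier M" and ac: "\<alpha> \<in> carrier M" using x a L_c GJ_c by auto
  obtain y where y: "y \<in> carrier M" "y \<otimes> x = e" using stabL x L_def by blast
  obtain \<beta> where b: "\<beta> \<in> GJ M e" "\<alpha> \<otimes> \<beta> = e" using GJ_inv a by blast
  have bc: "\<beta> \<in> carrier M" using b GJ_c by auto
  have xJ: "x \<otimes> \<alpha> \<in> Jid M e" using Jid_multr[OF _ ac] x L_Js Js_iff by auto
  have "y \<otimes> (x \<otimes> \<alpha>) \<otimes> \<beta> = (y \<otimes> x) \<otimes> (\<alpha> \<otimes> \<beta>)" using xc ac bc y(1) by (simp add: ma mc)
  then have "e \<in> Jid M (x \<otimes> \<alpha>)" using Jid_mem[OF mc[OF xc ac] y(1) bc] y b ee by simp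
  then have "Jid M e \<subseteq> Jid M (x \<otimes> \<alpha>)" using Jid_trans xc ac mc by auto
  moreover have "Jid M (x \<otimes> \<alpha>) \<subseteq> Jid M e" using Jid_trans[OF eM xJ] .
  ultimately have "x \<otimes> \<alpha> \<in> Js" using xJ Js_iff by auto
  moreover have "x \<otimes> \<alpha> \<otimes> e = x \<otimes> \<alpha>" using GJ_re a xc ac eM by (simp add: ma)
  ultimately show ?thesis using L_def by auto
qed

lemma GJ_mult: assumes a: "\<alpha> \<in> GJ M e" and c: "\<gamma> \<in> GJ M e" shows "\<alpha> \<otimes> \<gamma> \<in> GJ M e"
proof -
  have L: "\<alpha> \<otimes> \<gamma> \<in> L" using L_mult[OF GJ_L[OF a] c] .
  have "e \<otimes> (\<alpha> \<otimes> \<gamma>) = (e \<otimes> \<alpha>) \<otimes> \<gamma>" using ma[OF eM GJ_c[OF a] GJ_c[OF c]] by simp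
  then have "e \<otimes> (\<alpha> \<otimes> \<gamma>) = \<alpha> \<otimes> \<gamma>" using GJ_le[OF a] by simp
  then show ?thesis using GJ_char L L_def by auto
qed

lemma L_cancel: assumes r: "r \<in> L" and a: "\<alpha> \<in> GJ M e" "\<beta> \<in> GJ M e" and eq: "r \<otimes> \<alpha> = r \<otimes> \<beta>"
  shows "\<alpha> = \<beta>"
proof -
  obtain y where y: "y \<in> carrier M" "y \<otimes> r = e" using stabL r L_def by blast
  have "y \<otimes> r \<otimes> \<alpha> = y \<otimes> r \<otimes> \<beta>" using eq y(1) r a L_c GJ_c by (simp add: ma)
  then show ?thesis using y(2) GJ_le a by simp
qed

lemma iGJ: assumes g: "g \<in> carrier G" shows "\<iota> g \<otimes> e \<in> GJ M e"
proof -
  have ic': "\<iota> g \<in> carrier M" using ic g by auto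
  have J: "\<iota> g \<otimes> e \<in> Jid M e" using Jid_multl[OF Jid_self[OF eM] ic'] .
  have U: "\<iota> g \<in> Units M" using iU g by auto
  have ivc: "inv (\<iota> g) \<in> carrier M" using monoid.Units_inv_closed[OF mon U] .
  have "inv (\<iota> g) \<otimes> (\<iota> g \<otimes> e) = (inv (\<iota> g) \<otimes> \<iota> g) \<otimes> e"
    using ma[OF ivc ic' eM] by simp
  also have "\<dots> = e" using monoid.Units_l_inv[OF mon U] ml[OF eM] by simp
  finally have "inv (\<iota> g) \<otimes> (\<iota> g \<otimes> e) \<otimes> \<one> = e" using mr[OF eM] by simp
  then have "e \<in> Jid M (\<iota> g \<otimes> e)"
    using Jid_mem[OF mc[OF ic' eM] ivc mo] by simp
  then have "Jid M e \<subseteq> Jid M (\<iota> g \<otimes> e)" using Jid_trans mc ic' eM by auto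
  then have "\<iota> g \<otimes> e \<in> Js" using J Js_iff Jid_trans[OF eM J] by auto
  moreover have "e \<otimes> (\<iota> g \<otimes> e) = \<iota> g \<otimes> e"
  proof -
    have "e \<otimes> (\<iota> g \<otimes> e) = (e \<otimes> \<iota> g) \<otimes> e" using ma[OF eM ic' eM] by simp
    also have "\<dots> = (\<iota> g \<otimes> e) \<otimes> e" using icomm[OF g eM] by simp
    also have "\<dots> = \<iota> g \<otimes> e" using ma[OF ic' eM eM] ee by simp
    finally show ?thesis .
  qed
  moreover have "\<iota> g \<otimes> e \<otimes> e = \<iota> g \<otimes> e" using ma[OF ic' eM eM] ee by simp
  ultimately show ?thesis using GJ_char by auto
qed

lemma p_L: "x \<in> L \<Longrightarrow> \<alpha> \<in> GJ M e \<Longrightarrow> p x \<alpha> = x \<otimes> \<alpha>"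
  using L_mult p_def L_Js by auto

lemma ig_swap: assumes x: "x \<in> L" and g: "g \<in> carrier G" shows "\<iota> g \<otimes> x = x \<otimes> (\<iota> g \<otimes> e)"
proof -
  have "x \<otimes> (\<iota> g \<otimes> e) = x \<otimes> (e \<otimes> \<iota> g)" using icomm[OF g eM] by simp
  also have "\<dots> = (x \<otimes> e) \<otimes> \<iota> g" using x L_c eM ic g by (simp add: ma)
  finally show ?thesis using L_e x icomm[OF g] L_c by simp
qed

lemma p_ig: assumes x: "x \<in> L" and g: "g \<in> carrier G" shows "p (\<iota> g) x = x \<otimes> (\<iota> g \<otimes> e)"
  using ig_swap[OF x g] L_mult[OF x iGJ[OF g]] L_Js p_def by simp

definition orb where "orb x = (\<lambda>\<alpha>. x \<otimes> \<alpha>) ` GJ M e"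
definition rep where "rep x = (SOME r. r \<in> orb x)"
definition coord where "coord x = (THE \<alpha>. \<alpha> \<in> GJ M e \<and> x = rep x \<otimes> \<alpha>)"

lemma orb_self: "x \<in> L \<Longrightarrow> x \<in> orb x" unfolding orb_def using e_GJ L_e by force
lemma orb_L: "x \<in> L \<Longrightarrow> orb x \<subseteq> L" unfolding orb_def using L_mult by auto
lemma orb_eq: assumes x: "x \<in> L" and a: "\<alpha> \<in> GJ M e" shows "orb (x \<otimes> \<alpha>) = orb x"
proof
  show "orb (x \<otimes> \<alpha>) \<subseteq> orb x" unfolding orb_def
    using GJ_mult a x L_c GJ_c by (force simp: ma)
next
  obtain \<beta> where b: "\<beta> \<in> GJ M e" "\<alpha> \<otimes> \<beta> = e" using GJ_inv a by blast
  have xb: "x = (x \<otimes> \<alpha>) \<otimes> \<beta>" using x a b L_c GJ_c L_e by (simp add: ma)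
  show "orb x \<subseteq> orb (x \<otimes> \<alpha>)"
  proof
    fix y assume "y \<in> orb x"
    then obtain \<gamma> where g: "\<gamma> \<in> GJ M e" "y = x \<otimes> \<gamma>" unfolding orb_def by auto
    then have "y = (x \<otimes> \<alpha>) \<otimes> (\<beta> \<otimes> \<gamma>)" using xb x a b L_c GJ_c mc by (metis ma)
    then show "y \<in> orb (x \<otimes> \<alpha>)" unfolding orb_def using GJ_mult b g by auto
  qed
qed

lemma rep_orb: "x \<in> L \<Longrightarrow> rep x \<in> orb x" unfolding rep_def using orb_self by (metis someI)
lemma rep_L: "x \<in> L \<Longrightarrow> rep x \<in> L" using rep_orb orb_L by auto

lemma coord: assumes x: "x \<in> L" shows "coord x \<in> GJ M e \<and> x = rep x \<otimes> coord x"
proof -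
  obtain \<gamma> where g: "\<gamma> \<in> GJ M e" "rep x = x \<otimes> \<gamma>" using rep_orb[OF x] unfolding orb_def by auto
  obtain \<beta> where b: "\<beta> \<in> GJ M e" "\<gamma> \<otimes> \<beta> = e" using GJ_inv g by blast
  have ex: "x = rep x \<otimes> \<beta>" using g b x L_c GJ_c L_e by (simp add: ma)
  have "\<exists>!\<alpha>. \<alpha> \<in> GJ M e \<and> x = rep x \<otimes> \<alpha>"
    using ex b L_cancel[OF rep_L[OF x]] by metis
  then show ?thesis unfolding coord_def by (rule theI')
qed

lemma rep_mult: "x \<in> L \<Longrightarrow> \<alpha> \<in> GJ M e \<Longrightarrow> rep (x \<otimes> \<alpha>) = rep x"
  unfolding rep_def using orb_eq by simp

lemma coord_mult: assumes x: "x \<in> L" and a: "\<alpha> \<in> GJ M e" shows "coord (x \<otimes> \<alpha>) = coord x \<otimes> \<alpha>"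
proof -
  have c1: "coord (x \<otimes> \<alpha>) \<in> GJ M e" "x \<otimes> \<alpha> = rep x \<otimes> coord (x \<otimes> \<alpha>)"
    using coord[OF L_mult[OF x a]] rep_mult[OF x a] by auto
  have "x \<otimes> \<alpha> = rep x \<otimes> (coord x \<otimes> \<alpha>)"
    using coord[OF x] a rep_L[OF x] L_c GJ_c by (metis ma)
  then show ?thesis using L_cancel[OF rep_L[OF x] c1(1) GJ_mult[OF conjunct1[OF coord[OF x]] a]] c1 by simp
qed

lemma GJ_hat: "\<alpha> \<in> GJ M e \<Longrightarrow> \<alpha> \<in> hatGJ M zM e" unfolding hatGJ_def by auto
lemma zM_hat: "zM \<in> hatGJ M zM e" unfolding hatGJ_def by auto
lemma hat_c: "\<alpha> \<in> hatGJ M zM e \<Longrightarrow> \<alpha> \<in> carrier M" unfolding hatGJ_def using GJ_c zMc by auto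

lemma Wobj: "vect_obj G W zW act" using rp unfolding repGJ_obj_def by auto
lemma zW: "zW \<in> W" using Wobj unfolding vect_obj_def by auto
lemma actW: "g \<in> carrier G \<Longrightarrow> w \<in> W \<Longrightarrow> act g w \<in> W" using Wobj unfolding vect_obj_def by auto
lemma act_free: "g \<in> carrier G \<Longrightarrow> w \<in> W \<Longrightarrow> w \<noteq> zW \<Longrightarrow> act g w = w \<Longrightarrow> g = \<one>\<^bsub>G\<^esub>"
  using Wobj unfolding vect_obj_def by auto
lemma sigW: "\<alpha> \<in> hatGJ M zM e \<Longrightarrow> w \<in> W \<Longrightarrow> \<sigma> \<alpha> w \<in> W"
  using rp unfolding repGJ_obj_def vect_mor_def by auto
lemma sigz: "\<alpha> \<in> hatGJ M zM e \<Longrightarrow> \<sigma> \<alpha> zW = zW"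
  using rp unfolding repGJ_obj_def vect_mor_def by auto
lemma sigact: "\<alpha> \<in> hatGJ M zM e \<Longrightarrow> g \<in> carrier G \<Longrightarrow> w \<in> W \<Longrightarrow> \<sigma> \<alpha> (act g w) = act g (\<sigma> \<alpha> w)"
  using rp unfolding repGJ_obj_def vect_mor_def by auto
lemma sigcomp: "\<alpha> \<in> hatGJ M zM e \<Longrightarrow> \<beta> \<in> hatGJ M zM e \<Longrightarrow> w \<in> W \<Longrightarrow> \<sigma> (\<alpha> \<otimes> \<beta>) w = \<sigma> \<alpha> (\<sigma> \<beta> w)"
  using rp unfolding repGJ_obj_def by auto
lemma sige: "w \<in> W \<Longrightarrow> \<sigma> e w = w" using rp unfolding repGJ_obj_def by auto
lemma sigzM: "w \<in> W \<Longrightarrow> \<sigma> zM w = zW" using rp unfolding repGJ_obj_def by auto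
lemma sigg: "g \<in> carrier G \<Longrightarrow> w \<in> W \<Longrightarrow> \<sigma> (\<iota> g \<otimes> e) w = act g w" using rp unfolding repGJ_obj_def by auto

definition Phi where
  "Phi u = (if fst u \<in> L \<and> \<sigma> (coord (fst u)) (snd u) \<noteq> zW
            then Some (rep (fst u), \<sigma> (coord (fst u)) (snd u)) else None)"

lemma Phi_mult: assumes x: "x \<in> L" and a: "\<alpha> \<in> GJ M e" and w: "w \<in> W"
  shows "Phi (x \<otimes> \<alpha>, w) = Phi (x, \<sigma> \<alpha> w)"
proof -
  have "\<sigma> (coord (x \<otimes> \<alpha>)) w = \<sigma> (coord x) (\<sigma> \<alpha> w)"
    using coord_mult[OF x a] sigcomp[OF GJ_hat GJ_hat w] coord[OF x] a by simp
  then show ?thesis unfolding Phi_def using L_mult[OF x a] x rep_mult[OF x a] by simp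
qed

lemma Phi_zW: "Phi (x, zW) = None" unfolding Phi_def using sigz GJ_hat coord by auto
lemma Phi_zM: "Phi (zM, w) = None" unfolding Phi_def using zM_notL by auto


abbreviation "A \<equiv> PEe M zM e \<times> W"
abbreviation "S \<equiv> tens_gen G M zM \<iota> e W zW act \<sigma>"
abbreviation "R \<equiv> tens_rel G M zM \<iota> e W zW act \<sigma>"
abbreviation "Cl u \<equiv> R `` {u}"
definition F :: "'m \<Rightarrow> 'm \<times> 'w \<Rightarrow> 'm \<times> 'w" where "F a u = (p a (fst u), snd u)"

lemma p_right_PEe: assumes x: "x \<in> PEe M zM e" and a: "\<alpha> \<in> hatGJ M zM e" shows "p x \<alpha> \<in> PEe M zM e"
proof -
  have "p zM \<alpha> = zM" using p_def zl hat_c a zM_notJs by simp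
  moreover have "p x zM = zM" using p_def zr PEe_c x zM_notJs by simp
  moreover have "x \<in> L \<Longrightarrow> \<alpha> \<in> GJ M e \<Longrightarrow> p x \<alpha> \<in> PEe M zM e" using p_L L_mult PEe_eq by auto
  ultimately show ?thesis using x a PEe_eq zM_PEe unfolding hatGJ_def by auto
qed

lemma S1: assumes "x \<in> PEe M zM e" "\<alpha> \<in> hatGJ M zM e" "w \<in> W"
  shows "((p x \<alpha>, w), (x, \<sigma> \<alpha> w)) \<in> S"
proof -
  have "((p x \<alpha>, w), (x, \<sigma> \<alpha> w)) \<in> {((pmult M zM e x \<alpha>, w), (x, \<sigma> \<alpha> w)) | x \<alpha> w.
         x \<in> PEe M zM e \<and> \<alpha> \<in> hatGJ M zM e \<and> w \<in> W}" using assms by blast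
  moreover have "((p x \<alpha>, w), (x, \<sigma> \<alpha> w)) \<in> A \<times> A" using assms p_right_PEe sigW by auto
  ultimately show ?thesis unfolding tens_gen_def by (intro IntI UnI1)
qed
lemma S2: assumes "x \<in> PEe M zM e" "g \<in> carrier G" "w \<in> W"
  shows "((p (\<iota> g) x, w), (x, act g w)) \<in> S"
proof -
  have "((p (\<iota> g) x, w), (x, act g w)) \<in> {((pmult M zM e (\<iota> g) x, w), (x, act g w)) | x g w.
         x \<in> PEe M zM e \<and> g \<in> carrier G \<and> w \<in> W}" using assms by blast
  moreover have "((p (\<iota> g) x, w), (x, act g w)) \<in> A \<times> A" using assms PEe_closed ic actW by auto
  ultimately show ?thesis unfolding tens_gen_def by (intro IntI UnI1 UnI2)
qed
lemma S3: assumes "x \<in> PEe M zM e" "w \<in> W"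
  shows "((x, zW), (zM, w)) \<in> S"
proof -
  have "((x, zW), (zM, w)) \<in> {((x, zW), (zM, w)) | x w. x \<in> PEe M zM e \<and> w \<in> W}" using assms by blast
  moreover have "((x, zW), (zM, w)) \<in> A \<times> A" using assms zM_PEe zW by auto
  ultimately show ?thesis unfolding tens_gen_def by (intro IntI UnI2)
qed

lemma S_cases: assumes "(u, v) \<in> S"
  obtains (g1) x \<alpha> w where "x \<in> PEe M zM e" "\<alpha> \<in> hatGJ M zM e" "w \<in> W" "u = (p x \<alpha>, w)" "v = (x, \<sigma> \<alpha> w)"
  | (g2) x g w where "x \<in> PEe M zM e" "g \<in> carrier G" "w \<in> W" "u = (p (\<iota> g) x, w)" "v = (x, act g w)"
  | (g3) x w where "x \<in> PEe M zM e" "w \<in> W" "u = (x, zW)" "v = (zM, w)"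
proof -
  have "(u, v) \<in> {((pmult M zM e x \<alpha>, w), (x, \<sigma> \<alpha> w)) | x \<alpha> w.
         x \<in> PEe M zM e \<and> \<alpha> \<in> hatGJ M zM e \<and> w \<in> W}
    \<union> {((pmult M zM e (\<iota> g) x, w), (x, act g w)) | x g w.
         x \<in> PEe M zM e \<and> g \<in> carrier G \<and> w \<in> W}
    \<union> {((x, zW), (zM, w)) | x w. x \<in> PEe M zM e \<and> w \<in> W}"
    using assms unfolding tens_gen_def by (rule IntD1)
  then consider (a) "(u, v) \<in> {((pmult M zM e x \<alpha>, w), (x, \<sigma> \<alpha> w)) | x \<alpha> w.
         x \<in> PEe M zM e \<and> \<alpha> \<in> hatGJ M zM e \<and> w \<in> W}"
    | (b) "(u, v) \<in> {((pmult M zM e (\<iota> g) x, w), (x, act g w)) | x g w.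
         x \<in> PEe M zM e \<and> g \<in> carrier G \<and> w \<in> W}"
    | (c) "(u, v) \<in> {((x, zW), (zM, w)) | x w. x \<in> PEe M zM e \<and> w \<in> W}" by blast
  then show ?thesis
  proof cases
    case a
    then obtain x \<alpha> w where "x \<in> PEe M zM e" "\<alpha> \<in> hatGJ M zM e" "w \<in> W" "u = (p x \<alpha>, w)" "v = (x, \<sigma> \<alpha> w)"
      by blast
    then show ?thesis using that(1) by blast
  next
    case b
    then obtain x g w where "x \<in> PEe M zM e" "g \<in> carrier G" "w \<in> W" "u = (p (\<iota> g) x, w)" "v = (x, act g w)"
      by blast
    then show ?thesis using that(2) by blast
  next
    case c
    then obtain x w where "x \<in> PEe M zM e" "w \<in> W" "u = (x, zW)" "v = (zM, w)" by blast
    then show ?thesis using that(3) by blast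
  qed
qed

lemma S_R: "(u, v) \<in> S \<Longrightarrow> (u, v) \<in> R" unfolding tens_rel_def by auto
lemma S_R': "(u, v) \<in> S \<Longrightarrow> (v, u) \<in> R" unfolding tens_rel_def by auto

lemma R_equiv: "equiv UNIV R"
proof -
  have "sym (S \<union> S\<inverse>)" by (rule sym_Un_converse)
  then have "sym R" unfolding tens_rel_def by (rule sym_rtrancl)
  then show ?thesis unfolding equiv_def tens_rel_def using refl_rtrancl trans_rtrancl by auto
qed

lemma Cl_eq: "Cl u = Cl v \<longleftrightarrow> (u, v) \<in> R"
  using equiv_class_eq_iff[OF R_equiv] by auto
lemma R_trans: "(u, v) \<in> R \<Longrightarrow> (v, t) \<in> R \<Longrightarrow> (u, t) \<in> R"
  using R_equiv unfolding equiv_def trans_def by blast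
lemma R_sym: "(u, v) \<in> R \<Longrightarrow> (v, u) \<in> R"
  using R_equiv unfolding equiv_def sym_def by blast

lemma Phi_S: assumes "(u, v) \<in> S" shows "Phi u = Phi v"
  using assms
proof (cases rule: S_cases)
  case (g1 x \<alpha> w)
  show ?thesis
  proof (cases "x = zM")
    case True
    then show ?thesis using g1 p_def zl hat_c zM_notJs Phi_zM by simp
  next
    case xn: False
    then have xL: "x \<in> L" using g1 PEe_eq by auto
    show ?thesis
    proof (cases "\<alpha> = zM")
      case True
      then show ?thesis using g1 p_def zr PEe_c zM_notJs Phi_zM sigzM Phi_zW by simp
    next
      case False
      then have "\<alpha> \<in> GJ M e" using g1 unfolding hatGJ_def by auto
      then show ?thesis using g1 xL p_L Phi_mult by simp
    qed
  qed
next
  case (g2 x g w)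
  show ?thesis
  proof (cases "x = zM")
    case True
    then show ?thesis using g2 P_az ic Phi_zM by simp
  next
    case False
    then have xL: "x \<in> L" using g2 PEe_eq by auto
    then show ?thesis using g2 p_ig Phi_mult iGJ sigg by simp
  qed
next
  case (g3 x w)
  then show ?thesis using Phi_zW Phi_zM by simp
qed

lemma Phi_R: "(u, v) \<in> R \<Longrightarrow> Phi u = Phi v"
  unfolding tens_rel_def
proof (induction rule: rtrancl_induct)
  case base
  then show ?case by simp
next
  case (step y z)
  have "Phi y = Phi z"
  proof (cases "(y, z) \<in> S")
    case True then show ?thesis using Phi_S by blast
  next
    case False then have "(z, y) \<in> S" using step(2) by blast
    then show ?thesis using Phi_S by metis
  qed
  then show ?case using step(3) by simp
qed

lemma Phi_None: assumes u: "u \<in> A" and n: "Phi u = None" shows "(u, (zM, zW)) \<in> R"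
proof -
  obtain x w where xw: "u = (x, w)" "x \<in> PEe M zM e" "w \<in> W" using u by auto
  show ?thesis
  proof (cases "x = zM")
    case True
    then show ?thesis using xw S_R' S3 zM_PEe by auto
  next
    case False
    then have xL: "x \<in> L" using xw PEe_eq by auto
    have sz: "\<sigma> (coord x) w = zW" using n xw xL unfolding Phi_def by (auto split: if_splits)
    have "x = p (rep x) (coord x)" using p_L rep_L coord xL by metis
    then have "(u, (rep x, zW)) \<in> R" using S_R[OF S1[of "rep x" "coord x" w]] xw rep_L[OF xL] PEe_eq
        GJ_hat coord[OF xL] sz by auto
    moreover have "((rep x, zW), (zM, zW)) \<in> R" using S_R[OF S3] rep_L[OF xL] PEe_eq zW by auto
    ultimately show ?thesis using R_trans by blast
  qed
qed

lemma Phi_Some: assumes u: "u \<in> A" and n: "Phi u = Some (r, v)" shows "(u, (r, v)) \<in> R"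
proof -
  obtain x w where xw: "u = (x, w)" "x \<in> PEe M zM e" "w \<in> W" using u by auto
  have xL: "x \<in> L" and rv: "r = rep x" "v = \<sigma> (coord x) w" using n xw unfolding Phi_def by (auto split: if_splits)
  have "x = p (rep x) (coord x)" using p_L rep_L coord xL by metis
  then show ?thesis using S_R[OF S1[of "rep x" "coord x" w]] xw rep_L[OF xL] PEe_eq
        GJ_hat coord[OF xL] rv by auto
qed

lemma F_S: assumes a: "a \<in> carrier M" and s: "(u, v) \<in> S" shows "(F a u, F a v) \<in> S"
  using s
proof (cases rule: S_cases)
  case (g1 x \<alpha> w)
  have "p a (p x \<alpha>) = p (p a x) \<alpha>" using assoc2[OF a _ hat_c] g1 PEe_P Pset_Jid by auto
  then show ?thesis using g1 F_def S1[OF PEe_closed[OF a g1(1)] g1(2) g1(3)] by simp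
next
  case (g2 x g w)
  then show ?thesis using F_def S2 PEe_closed a P_comm PEe_P by simp
next
  case (g3 x w)
  then show ?thesis using F_def S3 PEe_closed a P_az by simp
qed

lemma F_R: assumes a: "a \<in> carrier M" and r: "(u, v) \<in> R" shows "(F a u, F a v) \<in> R"
  using r unfolding tens_rel_def
proof (induction rule: rtrancl_induct)
  case base
  then show ?case by simp
next
  case (step y z)
  have "(F a y, F a z) \<in> (S \<union> S\<inverse>)\<^sup>*"
  proof (cases "(y, z) \<in> S")
    case True
    then have "(F a y, F a z) \<in> S" by (rule F_S[OF a])
    then show ?thesis by (intro r_into_rtrancl UnI1)
  next
    case False then have "(z, y) \<in> S" using step(2) by blast
    then have "(F a z, F a y) \<in> S" by (rule F_S[OF a])
    then show ?thesis by (intro r_into_rtrancl UnI2 converseI)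
  qed
  with step(3) show ?case by (rule rtrancl_trans)
qed

lemma mact_Cl: assumes a: "a \<in> carrier M" shows "tens_mact G M zM \<iota> e W zW act \<sigma> a (Cl u) = Cl (F a u)"
proof -
  have all: "Cl (F a v) = Cl (F a u)" if v: "v \<in> Cl u" for v
  proof -
    have "(u, v) \<in> R" using v by simp
    then have "(F a u, F a v) \<in> R" by (rule F_R[OF a])
    then have "(F a v, F a u) \<in> R" by (rule R_sym)
    then show ?thesis by (rule iffD2[OF Cl_eq])
  qed
  have fe: "(\<lambda>(x, w). R `` {(p a x, w)}) = (\<lambda>v. Cl (F a v))"
    by (rule ext) (simp add: F_def split: prod.splits)
  have "tens_mact G M zM \<iota> e W zW act \<sigma> a (Cl u) = \<Union> ((\<lambda>v. Cl (F a v)) ` Cl u)"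
    unfolding tens_mact_def fe by simp
  moreover have uu: "u \<in> Cl u" unfolding tens_rel_def by simp
  ultimately show ?thesis using all by blast
qed

lemma gact_eq: "tens_gact G M zM \<iota> e W zW act \<sigma> g C = tens_mact G M zM \<iota> e W zW act \<sigma> (\<iota> g) C"
  unfolding tens_gact_def tens_mact_def by simp

lemma F_A: "a \<in> carrier M \<Longrightarrow> u \<in> A \<Longrightarrow> F a u \<in> A" using F_def PEe_closed by auto

lemma carr: "tens_carrier G M zM \<iota> e W zW act \<sigma> = (\<lambda>u. Cl u) ` A"
  unfolding tens_carrier_def quotient_def by auto


abbreviation "V \<equiv> tens_carrier G M zM \<iota> e W zW act \<sigma>"
abbreviation "Z \<equiv> tens_zero G M zM \<iota> e W zW act \<sigma>"
abbreviation "ga \<equiv> tens_gact G M zM \<iota> e W zW act \<sigma>"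
abbreviation "mac \<equiv> tens_mact G M zM \<iota> e W zW act \<sigma>"

lemma Z_eq: "Z = Cl (zM, zW)" unfolding tens_zero_def by simp
lemma gact_Cl: "g \<in> carrier G \<Longrightarrow> ga g (Cl u) = Cl (F (\<iota> g) u)"
  using gact_eq mact_Cl ic by simp
lemma V_E: assumes "C \<in> V" obtains x w where "x \<in> PEe M zM e" "w \<in> W" "C = Cl (x, w)"
  using assms carr by auto

lemma finA: "finite A"
proof -
  have "PEe M zM e \<subseteq> carrier M" using PEe_c by auto
  then have "finite (PEe M zM e)" using finM finite_subset by auto
  moreover have "finite W" using Wobj unfolding vect_obj_def by auto
  ultimately show ?thesis by auto
qed

lemma zero_row: assumes w: "w \<in> W" shows "Cl (zM, w) = Z"
proof -
  have "((zM, zW), (zM, w)) \<in> S" using S3[OF zM_PEe w] .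
  then have "((zM, w), (zM, zW)) \<in> R" by (rule S_R')
  then have "Cl (zM, w) = Cl (zM, zW)" by (rule iffD2[OF Cl_eq])
  then show ?thesis unfolding Z_eq .
qed

lemma ga_comp: assumes g: "g \<in> carrier G" and h: "h \<in> carrier G" and C: "C \<in> V"
  shows "ga (g \<otimes>\<^bsub>G\<^esub> h) C = ga g (ga h C)"
proof -
  obtain x w where xw: "x \<in> PEe M zM e" "w \<in> W" "C = Cl (x, w)" using C V_E by blast
  have gh: "g \<otimes>\<^bsub>G\<^esub> h \<in> carrier G" using monoid.m_closed[OF group.is_monoid[OF grp] g h] .
  have "ga (g \<otimes>\<^bsub>G\<^esub> h) C = Cl (p (\<iota> (g \<otimes>\<^bsub>G\<^esub> h)) x, w)" using xw(3) gact_Cl[OF gh] F_def by simp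
  also have "\<dots> = Cl (p (\<iota> g) (p (\<iota> h) x), w)" using P_gcomp[OF g h PEe_P[OF xw(1)]] by simp
  also have "\<dots> = ga g (ga h C)" using xw(3) gact_Cl[OF g] gact_Cl[OF h] F_def by simp
  finally show ?thesis .
qed

lemma one_G: "\<one>\<^bsub>G\<^esub> \<in> carrier G" using monoid.one_closed[OF group.is_monoid[OF grp]] .

lemma vobj: "vect_obj G V Z ga"
  unfolding vect_obj_def
proof (intro conjI ballI impI)
  show "finite V" using carr finA by simp
  show "Z \<in> V" using carr Z_eq zM_PEe zW by auto
next
  fix g C assume g: "g \<in> carrier G" and C: "C \<in> V"
  obtain x w where xw: "x \<in> PEe M zM e" "w \<in> W" "C = Cl (x, w)" using C V_E by blast
  have "ga g C = Cl (F (\<iota> g) (x, w))" using gact_Cl[OF g] xw(3) by simp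
  moreover have "F (\<iota> g) (x, w) \<in> A" using F_A[OF ic[OF g]] xw by simp
  ultimately show "ga g C \<in> V" using carr by simp
next
  fix C assume C: "C \<in> V"
  obtain x w where xw: "x \<in> PEe M zM e" "w \<in> W" "C = Cl (x, w)" using C V_E by blast
  have "ga \<one>\<^bsub>G\<^esub> C = Cl (p (\<iota> \<one>\<^bsub>G\<^esub>) x, w)" using gact_Cl[OF one_G] xw(3) F_def by simp
  then show "ga \<one>\<^bsub>G\<^esub> C = C" using P_gone[OF PEe_P[OF xw(1)]] xw(3) by simp
next
  fix g h C assume "g \<in> carrier G" "h \<in> carrier G" "C \<in> V"
  then show "ga (g \<otimes>\<^bsub>G\<^esub> h) C = ga g (ga h C)" by (rule ga_comp)
next
  fix g assume g: "g \<in> carrier G"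
  have "ga g Z = Cl (p (\<iota> g) zM, zW)" using gact_Cl[OF g] Z_eq F_def by simp
  then show "ga g Z = Z" using P_az[OF ic[OF g]] Z_eq by simp
next
  fix g C assume g: "g \<in> carrier G" and C: "C \<in> V" and nz: "C \<noteq> Z" and fix1: "ga g C = C"
  obtain x w where xw: "x \<in> PEe M zM e" "w \<in> W" "C = Cl (x, w)" using C V_E by blast
  have PN: "Phi (x, w) \<noteq> None"
  proof
    assume "Phi (x, w) = None"
    then have "((x, w), (zM, zW)) \<in> R" using Phi_None[of "(x, w)"] xw by simp
    then have "Cl (x, w) = Cl (zM, zW)" by (rule iffD2[OF Cl_eq])
    then show False using nz xw(3) Z_eq by simp
  qed
  then have xL: "x \<in> L" and sn: "\<sigma> (coord x) w \<noteq> zW" unfolding Phi_def by (auto split: if_splits)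
  have "Cl (p (\<iota> g) x, w) = Cl (x, w)" using fix1 gact_Cl[OF g] xw(3) F_def by simp
  then have "((p (\<iota> g) x, w), (x, w)) \<in> R" by (rule iffD1[OF Cl_eq])
  then have "Phi (p (\<iota> g) x, w) = Phi (x, w)" by (rule Phi_R)
  moreover have "Phi (p (\<iota> g) x, w) = Phi (x, act g w)"
    using p_ig[OF xL g] Phi_mult[OF xL iGJ[OF g] xw(2)] sigg[OF g xw(2)] by simp
  ultimately have "Phi (x, act g w) = Phi (x, w)" by simp
  then have "\<sigma> (coord x) (act g w) = \<sigma> (coord x) w" using xL sn unfolding Phi_def
    by (auto split: if_splits)
  then have "act g (\<sigma> (coord x) w) = \<sigma> (coord x) w"
    using sigact[OF GJ_hat[OF conjunct1[OF coord[OF xL]]] g xw(2)] by simp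
  then show "g = \<one>\<^bsub>G\<^esub>" using act_free[OF g sigW[OF GJ_hat[OF conjunct1[OF coord[OF xL]]] xw(2)] sn] by simp
qed

lemma orbit_key: assumes a: "a \<in> carrier M"
  and u1: "x1 \<in> PEe M zM e" "w1 \<in> W" and u2: "x2 \<in> PEe M zM e" "w2 \<in> W"
  and eq: "mac a (Cl (x1, w1)) = mac a (Cl (x2, w2))" and nz: "mac a (Cl (x1, w1)) \<noteq> Z"
  shows "\<exists>h\<in>carrier G. Cl (x1, w1) = ga h (Cl (x2, w2))"
proof -
  define y1 where "y1 = p a x1"
  define y2 where "y2 = p a x2"
  have e1: "Cl (y1, w1) = Cl (y2, w2)" using eq mact_Cl[OF a] F_def y1_def y2_def by simp
  have PE: "Phi (y1, w1) = Phi (y2, w2)" using iffD1[OF Cl_eq e1] by (rule Phi_R)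
  have yA: "(y1, w1) \<in> A" "(y2, w2) \<in> A" using y1_def y2_def PEe_closed a u1 u2 by auto
  have PN: "Phi (y1, w1) \<noteq> None"
  proof
    assume "Phi (y1, w1) = None"
    then have "((y1, w1), (zM, zW)) \<in> R" using Phi_None[OF yA(1)] by simp
    then have "Cl (y1, w1) = Cl (zM, zW)" by (rule iffD2[OF Cl_eq])
    moreover have "mac a (Cl (x1, w1)) = Cl (y1, w1)" using mact_Cl[OF a] F_def y1_def by simp
    ultimately show False using nz Z_eq by simp
  qed
  then have y1L: "y1 \<in> L" and s1: "\<sigma> (coord y1) w1 \<noteq> zW" unfolding Phi_def by (auto split: if_splits)
  have PN2: "Phi (y2, w2) \<noteq> None" using PN PE by simp
  then have y2L: "y2 \<in> L" unfolding Phi_def by (auto split: if_splits)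
  have rr: "rep y1 = rep y2" and ss: "\<sigma> (coord y1) w1 = \<sigma> (coord y2) w2"
    using PE y1L y2L PN PN2 unfolding Phi_def by (auto split: if_splits)
  define r where "r = rep y1"
  define c1 where "c1 = coord y1"
  define c2 where "c2 = coord y2"
  have c1: "c1 \<in> GJ M e" "y1 = r \<otimes> c1" using coord[OF y1L] c1_def r_def by auto
  have c2: "c2 \<in> GJ M e" "y2 = r \<otimes> c2" using coord[OF y2L] c2_def r_def rr by auto
  have rL: "r \<in> L" using rep_L[OF y1L] r_def by simp
  obtain d2 where d2: "d2 \<in> GJ M e" "c2 \<otimes> d2 = e" "d2 \<otimes> c2 = e" using GJ_inv[OF c2(1)] by blast
  define \<gamma> where "\<gamma> = d2 \<otimes> c1"
  have gam: "\<gamma> \<in> GJ M e" using GJ_mult d2 c1 \<gamma>_def by simp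
  have x1n: "x1 \<noteq> zM" using y1L y1_def P_az a zM_notL by auto
  have x2n: "x2 \<noteq> zM" using y2L y2_def P_az a zM_notL by auto
  have x1L: "x1 \<in> L" and x2L: "x2 \<in> L" using x1n x2n u1 u2 PEe_eq by auto
  have cM: "r \<in> carrier M" "c1 \<in> carrier M" "c2 \<in> carrier M" "d2 \<in> carrier M" using rL L_c c1 c2 d2 GJ_c by auto
  have "p a (x2 \<otimes> \<gamma>) = p a (p x2 \<gamma>)" using p_L x2L gam by simp
  also have "\<dots> = p y2 \<gamma>" using assoc2[OF a _ GJ_c[OF gam]] x2L L_Js Js_iff y2_def by auto
  also have "\<dots> = y2 \<otimes> \<gamma>" using p_L y2L gam by simp
  also have "\<dots> = r \<otimes> (c2 \<otimes> d2) \<otimes> c1" using c2 \<gamma>_def cM by (simp add: ma mc)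
  also have "\<dots> = y1" using d2 L_e[OF rL] c1 by simp
  finally have pe: "p a (x2 \<otimes> \<gamma>) = p a x1" using y1_def by simp
  have x2gL: "x2 \<otimes> \<gamma> \<in> L" using L_mult x2L gam by simp
  have PP: "x1 \<in> Pset M zM e" "x2 \<otimes> \<gamma> \<in> Pset M zM e" using x1L x2gL Pset_eq L_Js by auto
  have "p a x1 \<noteq> zM" using y1L y1_def zM_notL by auto
  then have orbs: "(\<lambda>g. p (\<iota> g) x1) ` carrier G = (\<lambda>g. p (\<iota> g) (x2 \<otimes> \<gamma>)) ` carrier G"
    using P_orb[OF a PP] pe by simp
  have "\<one>\<^bsub>G\<^esub> \<in> carrier G" by (rule one_G)
  then have "x1 \<in> (\<lambda>g. p (\<iota> g) x1) ` carrier G" using P_gone PP by force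
  then obtain h where h: "h \<in> carrier G" "x1 = p (\<iota> h) (x2 \<otimes> \<gamma>)" using orbs by auto
  define x' where "x' = p (\<iota> h) x2"
  have x'P: "x' \<in> PEe M zM e" using x'_def PEe_closed ic h u2 by auto
  have x1eq: "x1 = p x' \<gamma>"
    using h assoc2[OF ic[OF h(1)] _ GJ_c[OF gam]] x2L L_Js Js_iff p_L gam x'_def by metis
  have "\<sigma> \<gamma> w1 = \<sigma> d2 (\<sigma> c1 w1)" using sigcomp GJ_hat d2 c1 u1 \<gamma>_def by simp
  also have "\<dots> = \<sigma> d2 (\<sigma> c2 w2)" using ss c1_def c2_def by simp
  also have "\<dots> = w2" using sigcomp[OF GJ_hat GJ_hat u2(2)] d2 c2 sige u2 by metis
  finally have sw: "\<sigma> \<gamma> w1 = w2" .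
  have "((x1, w1), (x', w2)) \<in> R" using S_R[OF S1[OF x'P GJ_hat[OF gam] u1(2)]] x1eq sw by simp
  then have "Cl (x1, w1) = Cl (x', w2)" by (rule iffD2[OF Cl_eq])
  also have "\<dots> = ga h (Cl (x2, w2))" using gact_Cl[OF h(1)] F_def x'_def by simp
  finally show ?thesis using h by blast
qed

lemma vmor: assumes a: "a \<in> carrier M" shows "vect_mor G V Z ga V Z ga (mac a)"
  unfolding vect_mor_def
proof (intro conjI ballI impI)
  fix C assume C: "C \<in> V"
  obtain x w where xw: "x \<in> PEe M zM e" "w \<in> W" "C = Cl (x, w)" using C V_E by blast
  show "mac a C \<in> V" using mact_Cl[OF a] xw carr F_A[OF a] by auto
next
  show "mac a Z = Z" using mact_Cl[OF a] Z_eq F_def P_az[OF a] by simp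
next
  fix g C assume g: "g \<in> carrier G" and C: "C \<in> V"
  obtain x w where xw: "x \<in> PEe M zM e" "w \<in> W" "C = Cl (x, w)" using C V_E by blast
  have "p a (p (\<iota> g) x) = p (\<iota> g) (p a x)" using P_comm[OF a g PEe_P[OF xw(1)]] .
  then show "mac a (ga g C) = ga g (mac a C)"
    using xw gact_Cl[OF g] mact_Cl[OF a] F_def by simp
next
  fix C1 C2 assume C1: "C1 \<in> V" and C2: "C2 \<in> V" and h: "mac a C1 = mac a C2 \<and> mac a C1 \<noteq> Z"
  obtain x1 w1 where u1: "x1 \<in> PEe M zM e" "w1 \<in> W" "C1 = Cl (x1, w1)" using C1 V_E by blast
  obtain x2 w2 where u2: "x2 \<in> PEe M zM e" "w2 \<in> W" "C2 = Cl (x2, w2)" using C2 V_E by blast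
  obtain k where k: "k \<in> carrier G" "C1 = ga k C2" using orbit_key[OF a u1(1,2) u2(1,2)] h u1 u2 by auto
  have gg: "group G" using grp .
  show "(\<lambda>g. ga g C1) ` carrier G = (\<lambda>g. ga g C2) ` carrier G"
  proof
    show "(\<lambda>g. ga g C1) ` carrier G \<subseteq> (\<lambda>g. ga g C2) ` carrier G"
    proof
      fix D assume "D \<in> (\<lambda>g. ga g C1) ` carrier G"
      then obtain g where g: "g \<in> carrier G" "D = ga g C1" by auto
      have "D = ga (g \<otimes>\<^bsub>G\<^esub> k) C2" using ga_comp[OF g(1) k(1) C2] g k by simp
      moreover have "g \<otimes>\<^bsub>G\<^esub> k \<in> carrier G" using monoid.m_closed[OF group.is_monoid[OF grp] g(1) k(1)] .
      ultimately show "D \<in> (\<lambda>g. ga g C2) ` carrier G" by auto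
    qed
  next
    show "(\<lambda>g. ga g C2) ` carrier G \<subseteq> (\<lambda>g. ga g C1) ` carrier G"
    proof
      fix D assume "D \<in> (\<lambda>g. ga g C2) ` carrier G"
      then obtain g where g: "g \<in> carrier G" "D = ga g C2" by auto
      have ik: "inv\<^bsub>G\<^esub> k \<in> carrier G" using group.inv_closed[OF grp k(1)] .
      have gi: "g \<otimes>\<^bsub>G\<^esub> inv\<^bsub>G\<^esub> k \<in> carrier G" using monoid.m_closed[OF group.is_monoid[OF grp] g(1) ik] .
      have "g \<otimes>\<^bsub>G\<^esub> inv\<^bsub>G\<^esub> k \<otimes>\<^bsub>G\<^esub> k = g \<otimes>\<^bsub>G\<^esub> (inv\<^bsub>G\<^esub> k \<otimes>\<^bsub>G\<^esub> k)"
        using monoid.m_assoc[OF group.is_monoid[OF grp] g(1) ik k(1)] .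
      also have "\<dots> = g" using group.l_inv[OF grp k(1)] monoid.r_one[OF group.is_monoid[OF grp] g(1)] by simp
      finally have "g \<otimes>\<^bsub>G\<^esub> inv\<^bsub>G\<^esub> k \<otimes>\<^bsub>G\<^esub> k = g" .
      then have "ga (g \<otimes>\<^bsub>G\<^esub> inv\<^bsub>G\<^esub> k) C1 = D" using ga_comp[OF gi k(1) C2] k g by simp
      then show "D \<in> (\<lambda>g. ga g C1) ` carrier G" using gi by force
    qed
  qed
qed

lemma main: "rep_obj G M zM \<iota> V Z ga mac"
  unfolding rep_obj_def
proof (intro conjI ballI)
  show "vect_obj G V Z ga" by (rule vobj)
next
  fix a assume "a \<in> carrier M" then show "vect_mor G V Z ga V Z ga (mac a)" by (rule vmor)
next
  fix C assume C: "C \<in> V"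
  obtain x w where xw: "x \<in> PEe M zM e" "w \<in> W" "C = Cl (x, w)" using C V_E by blast
  show "mac \<one> C = C" using mact_Cl[OF mo] xw F_def P_one PEe_P by simp
next
  fix a b C assume a: "a \<in> carrier M" and b: "b \<in> carrier M" and C: "C \<in> V"
  obtain x w where xw: "x \<in> PEe M zM e" "w \<in> W" "C = Cl (x, w)" using C V_E by blast
  show "mac (a \<otimes> b) C = mac a (mac b C)"
    using mact_Cl[OF a] mact_Cl[OF b] mact_Cl[OF mc[OF a b]] xw F_def P_comp[OF a b PEe_P[OF xw(1)]] by simp
next
  fix C assume C: "C \<in> V"
  obtain x w where xw: "x \<in> PEe M zM e" "w \<in> W" "C = Cl (x, w)" using C V_E by blast
  show "mac zM C = Z" using mact_Cl[OF zMc] xw F_def P_zero PEe_P zero_row by simp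
next
  fix g C assume "g \<in> carrier G" "C \<in> V"
  show "mac (\<iota> g) C = ga g C" using gact_eq by simp
qed

end

theorem mainTheorem9:
  fixes G :: "('g,'c) monoid_scheme" and M :: "('m,'d) monoid_scheme"
    and zM :: 'm and \<iota> :: "'g \<Rightarrow> 'm" and e :: 'm
    and W :: "'w set" and zW :: 'w and act :: "'g \<Rightarrow> 'w \<Rightarrow> 'w" and \<sigma> :: "'m \<Rightarrow> 'w \<Rightarrow> 'w"
  assumes "comm_group G" and "finite (carrier G)"
    and "hatG_linear_monoid G M zM \<iota>"
    and "left_inductive G M zM \<iota>"
    and "e \<in> carrier M" and "e \<otimes>\<^bsub>M\<^esub> e = e" and "e \<noteq> zM"
    and "repGJ_obj G M zM \<iota> e W zW act \<sigma>"
  shows "rep_obj G M zM \<iota>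
           (tens_carrier G M zM \<iota> e W zW act \<sigma>)
           (tens_zero G M zM \<iota> e W zW act \<sigma>)
           (tens_gact G M zM \<iota> e W zW act \<sigma>)
           (tens_mact G M zM \<iota> e W zW act \<sigma>)"
proof -
  have gG: "group G" using assms(1) by (simp add: comm_group_def)
  interpret tctx G M zM \<iota> e W zW act \<sigma>
    by (rule tctx.intro[OF gG assms(3-8)])
  show ?thesis by (rule main)
qed

end
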